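(* Let $\Psi\in\mathcal{E}_c\otimes\mathfrak{gl}(T)^1$ satisfy $\Psi s\in \mathrm{im}\,\partial^*=\mathcal{B}_1$ for all $s\in T$, and set $\tilde\nabla=\nabla+\Psi$. Then the BGG-splitting operator $\tilde L_0:\mathcal{H}_0\to T$ and the first BGG-operator $\tilde\Theta_0:\mathcal{H}_0\to\mathcal{H}_1$ constructed from $\tilde\nabla$ coincide with those constructed from $\nabla$, i.e. $\tilde L_0=L_0$ and $\tilde\Theta_0=\Theta_0$.
   Context: Conformal geometry $(M,[g])$ with standard tractor bundle $\mathcal{S}$; $T$ is a tractor bundle (a subbundle of a tensor power of $\mathcal{S}$) with its tractor connection $\nabla$, filtered by homogeneity. $\mathfrak{gl}(T)^1$ denotes the endomorphisms of $T$ homogeneous of degree $\geq 1$ with respect to this filtration. On the chain spaces $\mathcal{C}_k=\mathcal{E}_{[c_1\cdots c_k]}\otimes T$ there is the conformally invariant Kostant codifferential $\partial^*:\mathcal{C}_{k+1}\to\mathcal{C}_k$; set $\mathcal{Z}_k=\ker\partial^*\cap\mathcal{C}_k$, $\mathcal{B}_k=\mathrm{im}\,\partial^*\cap\mathcal{C}_k$, $\mathcal{H}_k=\mathcal{Z}_k/\mathcal{B}_k$ with projections $\Pi_k:\mathcal{Z}_k\to\mathcal{H}_k$. The BGG-construction works for $\nabla$ and for any connection $\nabla+\Psi$ with $\Psi\in\mathcal{E}_c\otimes\mathfrak{gl}(T)^1$: for each $\sigma\in\mathcal{H}_0$ there is a unique lift $s=L_0\sigma\in T$ with $\Pi_0 s=\sigma$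 and $\partial^*(\nabla s)=0$ (this defines the BGG-splitting operator $L_0$), and the first BGG-operator is $\Theta_0=\Pi_1\circ\nabla\circ L_0$; the operators $\tilde L_0,\tilde\Theta_0$ are defined in the same way using $\tilde\nabla$ in place of $\nabla$. *)

theory Defs
  imports Main "HOL.Real_Vector_Spaces"
begin

text \<open>C0 = sections of T, C1 = T-valued 1-forms, C2 = T-valued 2-forms (spaces of sections,
  modelled as real vector spaces). dstar1 : C1 -> C0 and dstar2 : C2 -> C1 are the
  Kostant codifferentials (on C0 the codifferential is zero, so Z0 = C0).\<close>

definition Pi0 :: "('c1 \<Rightarrow> 'c0::ab_group_add) \<Rightarrow> 'c0 \<Rightarrow> 'c0 set" where
  "Pi0 dstar1 s = {s + dstar1 c | c. True}"

definition H0 :: "('c1 \<Rightarrow> 'c0::ab_group_add) \<Rightarrow> 'c0 set set" where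
  "H0 dstar1 = range (Pi0 dstar1)"

definition Z1 :: "('c1 \<Rightarrow> 'c0::zero) \<Rightarrow> 'c1 set" where
  "Z1 dstar1 = {z. dstar1 z = 0}"

definition Pi1 :: "('c2 \<Rightarrow> 'c1::ab_group_add) \<Rightarrow> 'c1 \<Rightarrow> 'c1 set" where
  "Pi1 dstar2 z = {z + dstar2 c | c. True}"

definition H1 :: "('c1 \<Rightarrow> 'c0::zero) \<Rightarrow> ('c2 \<Rightarrow> 'c1::ab_group_add) \<Rightarrow> 'c1 set set" where
  "H1 dstar1 dstar2 = Pi1 dstar2 ` Z1 dstar1"

definition L0 :: "('c1 \<Rightarrow> 'c0::ab_group_add) \<Rightarrow> ('c0 \<Rightarrow> 'c1::zero) \<Rightarrow> 'c0 set \<Rightarrow> 'c0" where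
  "L0 dstar1 nabla sigma = (THE s. Pi0 dstar1 s = sigma \<and> dstar1 (nabla s) = 0)"

definition Theta0 :: "('c1 \<Rightarrow> 'c0::ab_group_add) \<Rightarrow> ('c2 \<Rightarrow> 'c1::ab_group_add)
    \<Rightarrow> ('c0 \<Rightarrow> 'c1) \<Rightarrow> 'c0 set \<Rightarrow> 'c1 set" where
  "Theta0 dstar1 dstar2 nabla sigma = Pi1 dstar2 (nabla (L0 dstar1 nabla sigma))"

definition BGG_works :: "('c1 \<Rightarrow> 'c0::ab_group_add) \<Rightarrow> ('c0 \<Rightarrow> 'c1::zero) \<Rightarrow> bool" where
  "BGG_works dstar1 D \<longleftrightarrow>
     (\<forall>sigma\<in>H0 dstar1. \<exists>!s. Pi0 dstar1 s = sigma \<and> dstar1 (D s) = 0)"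

end

theory Submission
  imports Defs
begin

theorem mainTheorem2:
  fixes dstar1 :: "'c1::real_vector \<Rightarrow> 'c0::real_vector"
    and dstar2 :: "'c2::real_vector \<Rightarrow> 'c1"
    and nabla :: "'c0 \<Rightarrow> 'c1"
    and Adm :: "('c0 \<Rightarrow> 'c1) set"
    and Psi :: "'c0 \<Rightarrow> 'c1"
  assumes lin1: "linear dstar1"
    and lin2: "linear dstar2"
    and complex: "\<And>c. dstar1 (dstar2 c) = 0"
    and lin_nabla: "linear nabla"
    and adm_lin: "\<And>P. P \<in> Adm \<Longrightarrow> linear P"
    and bgg_nabla: "BGG_works dstar1 nabla"
    and bgg_adm: "\<And>P. P \<in> Adm \<Longrightarrow> BGG_works dstar1 (\<lambda>s. nabla s + P s)"
    and Psi_adm: "Psi \<in> Adm"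
    and Psi_B1: "\<And>s. Psi s \<in> range dstar2"
  shows "(\<forall>sigma\<in>H0 dstar1.
            L0 dstar1 (\<lambda>s. nabla s + Psi s) sigma = L0 dstar1 nabla sigma)
       \<and> (\<forall>sigma\<in>H0 dstar1.
            Theta0 dstar1 dstar2 (\<lambda>s. nabla s + Psi s) sigma = Theta0 dstar1 dstar2 nabla sigma)"
proof -
  have add1: "\<And>x y. dstar1 (x + y) = dstar1 x + dstar1 y" using lin1 by (simp add: linear_add)
  have add2: "\<And>x y. dstar2 (x + y) = dstar2 x + dstar2 y" using lin2 by (simp add: linear_add)
  have bt: "BGG_works dstar1 (\<lambda>s. nabla s + Psi s)" using bgg_adm Psi_adm by blast
  have key: "L0 dstar1 (\<lambda>s. nabla s + Psi s) sigma = L0 dstar1 nabla sigma" if sH: "sigma \<in> H0 dstar1" for sigma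
  proof -
    have e1: "\<exists>!s. Pi0 dstar1 s = sigma \<and> dstar1 (nabla s) = 0"
      using bgg_nabla sH unfolding BGG_works_def by (rule bspec)
    have e2: "\<exists>!s. Pi0 dstar1 s = sigma \<and> dstar1 (nabla s + Psi s) = 0"
      using bt sH unfolding BGG_works_def by (rule bspec)
    define s where "s = L0 dstar1 nabla sigma"
    have sp: "Pi0 dstar1 s = sigma \<and> dstar1 (nabla s) = 0"
      unfolding s_def L0_def by (rule theI'[OF e1])
    from Psi_B1[of s] obtain c where c: "Psi s = dstar2 c" by auto
    have d: "dstar1 (nabla s + Psi s) = 0" using sp c complex add1 by simp
    have "L0 dstar1 (\<lambda>s. nabla s + Psi s) sigma = s"
      unfolding L0_def by (rule the1_equality[OF e2]) (use sp d in simp)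
    then show ?thesis using s_def by simp
  qed
  have pi: "Pi1 dstar2 (z + Psi s) = Pi1 dstar2 z" for z s
  proof -
    from Psi_B1[of s] obtain c where c: "Psi s = dstar2 c" by auto
    have m: "dstar2 (- c) = - dstar2 c" using lin2 by (simp add: linear_neg)
    show ?thesis unfolding Pi1_def c
    proof (intro set_eqI iffI)
      fix x assume "x \<in> {z + dstar2 c + dstar2 d |d. True}"
      then obtain d where "x = z + dstar2 c + dstar2 d" by auto
      then have "x = z + dstar2 (c + d)" by (simp add: add2 add.assoc)
      then show "x \<in> {z + dstar2 d |d. True}" by auto
    next
      fix x assume "x \<in> {z + dstar2 d |d. True}"
      then obtain d where "x = z + dstar2 d" by auto
      have "dstar2 c + dstar2 (d + - c) = dstar2 d" by (simp only: add2[symmetric]) simp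
      then have "x = z + dstar2 c + dstar2 (d + - c)" using \<open>x = z + dstar2 d\<close> by (simp add: add.assoc)
      then show "x \<in> {z + dstar2 c + dstar2 d |d. True}" by blast
    qed
  qed
  show ?thesis
    using key by (auto simp: Theta0_def pi)
qed

end
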